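(* Let $c$ be a cost function on $(\mathbb{R}^n)^N$, $\alpha_i>0$, and $(\Phi_1,\dots,\Phi_N)$ an admissible tuple with $0<\int e^{-\alpha_i\Phi_i}dx<\infty$ for all $i$. Let $\mu_i=e^{-\alpha_i\Phi_i(x_i)}dx_i/\int e^{-\alpha_i\Phi_i}dx_i$ and $d(x)=\sum_{i}\Phi_i(x_i)-c(x)$. Assume that for every tuple of probability measures $\nu_1,\dots,\nu_N$ on $\mathbb{R}^n$, $$K^{\min}_d(\nu_1,\dots,\nu_N)\le\sum_{i=1}^N\frac1{\alpha_i}\mathrm{Ent}_{\mu_i}(\nu_i).$$ Then $\prod_i(\int e^{-\alpha_iV_i}dx)^{1/\alpha_i}\le\prod_i(\int e^{-\alpha_i\Phi_i}dx)^{1/\alpha_i}$ for every admissible tuple $(V_i)$ with $0<\int e^{-\alpha_iV_i}dx<\infty$ and $V_i,\Phi_i\in L^1(\nu_i)$, where $\nu_i=e^{-\alpha_iV_i}dx/\int e^{-\alpha_iV_i}dx$; i.e. $(\Phi_i)$ maximizes the functional $\mathcal{BS}_{\alpha,m}$ with Lebesgue reference measures $m_i=dx_i$ over such tuples.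
   Context: A tuple $(V_i)$ of functions $V_i:\mathbb{R}^n\to(-\infty,+\infty]$ is admissible (for $c$) if $\sum_iV_i(x_i)\ge c(x)$ for all $x=(x_1,\dots,x_N)\in(\mathbb{R}^n)^N$. $K^{\min}_d(\nu_1,\dots,\nu_N)=\inf_\pi\int d\,d\pi$ over probability measures $\pi$ on $(\mathbb{R}^n)^N$ with marginals $\nu_1,\dots,\nu_N$. $\mathrm{Ent}_\mu(\nu)=\int\rho\log\rho\,d\mu$ if $\nu=\rho\mu$, and $+\infty$ otherwise. *)

theory Defs
  imports "HOL-Probability.Probability"
begin

text \<open>Index set {1..N} is a finite type 'i; R^n is a euclidean space 'a with
  Lebesgue measure lborel. Potentials take values in ereal (meant: (-inf,+inf]).\<close>

definition admissible :: "(('i::finite \<Rightarrow> 'a) \<Rightarrow> real) \<Rightarrow> ('i \<Rightarrow> 'a \<Rightarrow> ereal) \<Rightarrow> bool" where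
  "admissible c V \<longleftrightarrow> (\<forall>x. (\<Sum>i\<in>UNIV. V i (x i)) \<ge> ereal (c x))"

definition expn :: "real \<Rightarrow> ereal \<Rightarrow> ennreal" where
  "expn a v = (case v of ereal r \<Rightarrow> ennreal (exp (- a * r)) | PInfty \<Rightarrow> 0 | MInfty \<Rightarrow> \<infinity>)"

definition Zint :: "real \<Rightarrow> ('a::euclidean_space \<Rightarrow> ereal) \<Rightarrow> ennreal" where
  "Zint a V = (\<integral>\<^sup>+ x. expn a (V x) \<partial>lborel)"

definition gibbs :: "real \<Rightarrow> ('a::euclidean_space \<Rightarrow> ereal) \<Rightarrow> 'a measure" where
  "gibbs a V = density lborel (\<lambda>x. expn a (V x) / Zint a V)"

definition couplings :: "('i::finite \<Rightarrow> 'a::euclidean_space measure) \<Rightarrow> ('i \<Rightarrow> 'a) measure set" where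
  "couplings \<nu> = {\<pi>. prob_space \<pi> \<and> sets \<pi> = sets (PiM UNIV (\<lambda>_. borel)) \<and>
                     (\<forall>i. distr \<pi> borel (\<lambda>x. x i) = \<nu> i)}"

text \<open>Optimal transport value for a nonnegative cost d (the case needed below).\<close>
definition Kmin :: "(('i::finite \<Rightarrow> 'a::euclidean_space) \<Rightarrow> ennreal) \<Rightarrow> ('i \<Rightarrow> 'a measure) \<Rightarrow> ennreal" where
  "Kmin d \<nu> = (INF \<pi>\<in>couplings \<nu>. \<integral>\<^sup>+ x. d x \<partial>\<pi>)"

text \<open>The integral is taken as (positive part) - (negative part); the negative part is finite
  since rho log rho >= -1/e and mu is finite.\<close>
definition Ent :: "'a measure \<Rightarrow> 'a measure \<Rightarrow> ereal" where
  "Ent \<mu> \<nu> = (if (\<exists>\<rho>\<in>borel_measurable \<mu>. \<nu> = density \<mu> \<rho>) then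
      (let \<rho> = (\<lambda>x. enn2real (RN_deriv \<mu> \<nu> x)) in
        enn2ereal (\<integral>\<^sup>+ x. ennreal (\<rho> x * ln (\<rho> x)) \<partial>\<mu>)
        - enn2ereal (\<integral>\<^sup>+ x. ennreal (- (\<rho> x * ln (\<rho> x))) \<partial>\<mu>))
    else \<infinity>)"

definition L1e :: "'a measure \<Rightarrow> ('a \<Rightarrow> ereal) \<Rightarrow> bool" where
  "L1e M f \<longleftrightarrow> f \<in> borel_measurable M \<and> (AE x in M. \<bar>f x\<bar> \<noteq> \<infinity>) \<and>
                integrable M (\<lambda>x. real_of_ereal (f x))"

end

theory Submission imports Defs begin

definition Ef :: "real \<Rightarrow> ('a \<Rightarrow> ereal) \<Rightarrow> 'a \<Rightarrow> real" where
  "Ef a V x = (if V x = \<infinity> then 0 else exp (- a * real_of_ereal (V x)))"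

lemma Ef_meas[measurable]:
  fixes V :: "'a::euclidean_space \<Rightarrow> ereal"
  assumes [measurable]: "V \<in> borel_measurable borel"
  shows "Ef a V \<in> borel_measurable borel"
  unfolding Ef_def by measurable

lemma Ef_nonneg: "0 \<le> Ef a V x" by (simp add: Ef_def)

lemma expn_Ef: assumes "V x \<noteq> -\<infinity>" shows "expn a (V x) = ennreal (Ef a V x)"
  using assms by (cases "V x") (auto simp: expn_def Ef_def)

lemma Zint_Ef:
  fixes V :: "'a::euclidean_space \<Rightarrow> ereal"
  assumes "\<And>x. V x \<noteq> -\<infinity>"
  shows "Zint a V = (\<integral>\<^sup>+ x. ennreal (Ef a V x) \<partial>lborel)"
  unfolding Zint_def using expn_Ef[of V, OF assms] by simp

lemma gibbs_repr:
  fixes V :: "'a::euclidean_space \<Rightarrow> ereal"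
  assumes V[measurable]: "V \<in> borel_measurable borel" and Vr: "\<And>x. V x \<noteq> -\<infinity>"
    and Z: "0 < Zint a V" "Zint a V < \<infinity>"
  shows "gibbs a V = density lborel (\<lambda>x. ennreal (Ef a V x / enn2real (Zint a V)))"
    and "prob_space (gibbs a V)"
proof -
  define Z where "Z = enn2real (Zint a V)"
  have ZZ: "Zint a V = ennreal Z" using Z unfolding Z_def by (simp add: less_top)
  have Zp: "Z > 0" using Z ZZ by simp
  have eq: "expn a (V x) / Zint a V = ennreal (Ef a V x / Z)" for x
    unfolding expn_Ef[of V, OF Vr] ZZ using Zp by (simp add: divide_ennreal Ef_nonneg)
  show g: "gibbs a V = density lborel (\<lambda>x. ennreal (Ef a V x / enn2real (Zint a V)))"
    unfolding gibbs_def eq Z_def ..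
  have "emeasure (gibbs a V) (space (gibbs a V)) = (\<integral>\<^sup>+ x. ennreal (Ef a V x) / ennreal Z \<partial>lborel)"
    unfolding g Z_def[symmetric] by (simp add: emeasure_density divide_ennreal Ef_nonneg Zp)
  also have "\<dots> = Zint a V / ennreal Z"
    by (subst nn_integral_divide) (auto simp: Zint_Ef[OF Vr])
  also have "\<dots> = 1" using ZZ Zp by (simp add: divide_ennreal)
  finally show "prob_space (gibbs a V)" by (rule prob_spaceI)
qed

lemma ln_alg:
  fixes a p v Zp Zv s :: real
  assumes "Zp > 0" "Zv > 0"
  shows "exp (- a * p) / Zp * (s * ((exp (- a * v) / Zv) / (exp (- a * p) / Zp)
          * ln ((exp (- a * v) / Zv) / (exp (- a * p) / Zp))))
       = exp (- a * v) / Zv * (s * (a * p - a * v + ln Zp - ln Zv))"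
proof -
  have "ln ((exp (- a * v) / Zv) / (exp (- a * p) / Zp)) = a * p - a * v + ln Zp - ln Zv"
    using assms by (simp add: ln_div ln_mult)
  moreover have "\<And>G F L. G > 0 \<Longrightarrow> G * (s * (F / G * L)) = F * (s * L)" by (simp add: field_simps)
  ultimately show ?thesis using assms by simp
qed

lemma integrable_fin:
  fixes h :: "'a \<Rightarrow> real"
  assumes "integrable M h"
  shows "(\<integral>\<^sup>+ x. ennreal (h x) \<partial>M) < \<infinity>" "(\<integral>\<^sup>+ x. ennreal (- h x) \<partial>M) < \<infinity>"
  using integrableD(2,3)[OF assms] by (simp_all add: less_top)

lemma enn2ereal_fin: assumes "(A::ennreal) < \<infinity>" shows "enn2ereal A = ereal (enn2real A)"
proof -
  have "enn2ereal A = enn2ereal (ennreal (enn2real A))" using assms by simp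
  also have "\<dots> = ereal (enn2real A)" by (rule enn2ereal_ennreal) simp
  finally show ?thesis .
qed

lemma ent_gibbs:
  fixes \<Phi> V :: "'a::euclidean_space \<Rightarrow> ereal"
  assumes a: "a > 0"
    and P[measurable]: "\<Phi> \<in> borel_measurable borel" and Pr: "\<And>x. \<Phi> x \<noteq> -\<infinity>"
    and PZ: "0 < Zint a \<Phi>" "Zint a \<Phi> < \<infinity>"
    and V[measurable]: "V \<in> borel_measurable borel" and Vr: "\<And>x. V x \<noteq> -\<infinity>"
    and VZ: "0 < Zint a V" "Zint a V < \<infinity>"
    and L1V: "L1e (gibbs a V) V" and L1P: "L1e (gibbs a V) \<Phi>"
  shows "Ent (gibbs a \<Phi>) (gibbs a V) = ereal (a * (\<integral>x. real_of_ereal (\<Phi> x) - real_of_ereal (V x) \<partial>gibbs a V)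
     + ln (enn2real (Zint a \<Phi>)) - ln (enn2real (Zint a V)))"
proof -
  define Zp where "Zp = enn2real (Zint a \<Phi>)"
  define Zv where "Zv = enn2real (Zint a V)"
  have Zp: "Zp > 0" using PZ unfolding Zp_def by (simp add: enn2real_positive_iff less_top)
  have Zv: "Zv > 0" using VZ unfolding Zv_def by (simp add: enn2real_positive_iff less_top)
  define gr where "gr x = Ef a \<Phi> x / Zp" for x
  define fr where "fr x = Ef a V x / Zv" for x
  have [measurable]: "gr \<in> borel_measurable borel" "fr \<in> borel_measurable borel"
    unfolding gr_def fr_def by measurable
  have gr0: "gr x \<ge> 0" "fr x \<ge> 0" for x using Zp Zv by (auto simp: gr_def fr_def Ef_nonneg)
  define \<mu> where "\<mu> = gibbs a \<Phi>"
  define \<nu> where "\<nu> = gibbs a V"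
  have \<mu>: "\<mu> = density lborel (\<lambda>x. ennreal (gr x))"
    unfolding \<mu>_def gr_def Zp_def by (rule gibbs_repr(1)[OF P Pr PZ])
  have \<nu>: "\<nu> = density lborel (\<lambda>x. ennreal (fr x))"
    unfolding \<nu>_def fr_def Zv_def by (rule gibbs_repr(1)[OF V Vr VZ])
  have \<mu>p: "prob_space \<mu>" unfolding \<mu>_def by (rule gibbs_repr(2)[OF P Pr PZ])
  have \<nu>p: "prob_space \<nu>" unfolding \<nu>_def by (rule gibbs_repr(2)[OF V Vr VZ])
  have sets\<mu>[measurable_cong]: "sets \<mu> = sets borel" unfolding \<mu> by simp
  have sets\<nu>[measurable_cong]: "sets \<nu> = sets borel" unfolding \<nu> by simp
  have AEfin: "AE x in lborel. 0 < fr x \<longrightarrow> \<Phi> x \<noteq> \<infinity> \<and> V x \<noteq> \<infinity>"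
  proof -
    have "AE x in \<nu>. \<bar>\<Phi> x\<bar> \<noteq> \<infinity>" "AE x in \<nu>. \<bar>V x\<bar> \<noteq> \<infinity>"
      using L1P L1V unfolding L1e_def \<nu>_def by auto
    then have "AE x in \<nu>. \<Phi> x \<noteq> \<infinity> \<and> V x \<noteq> \<infinity>" by eventually_elim auto
    then show ?thesis unfolding \<nu> by (subst (asm) AE_density) auto
  qed
  define r where "r x = (if \<Phi> x \<noteq> \<infinity> \<and> V x \<noteq> \<infinity> then fr x / gr x else 0)" for x
  have [measurable]: "r \<in> borel_measurable borel" unfolding r_def by measurable
  have r0: "r x \<ge> 0" for x using gr0[of x] by (simp add: r_def)
  define h where "h x = a * real_of_ereal (\<Phi> x) - a * real_of_ereal (V x) + ln Zp - ln Zv" for x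
  have [measurable]: "h \<in> borel_measurable borel" unfolding h_def by measurable
  have key: "gr x * (s * (r x * ln (r x))) = fr x * (s * h x)" if fin: "\<Phi> x \<noteq> \<infinity>" "V x \<noteq> \<infinity>" for x s
  proof -
    obtain p where p: "\<Phi> x = ereal p" using fin Pr[of x] by (cases "\<Phi> x") auto
    obtain v where v: "V x = ereal v" using fin Vr[of x] by (cases "V x") auto
    show ?thesis unfolding r_def gr_def fr_def h_def Ef_def using p v ln_alg[OF Zp Zv] by simp
  qed
  have dens: "density \<mu> (\<lambda>x. ennreal (r x)) = \<nu>"
  proof -
    have "density \<mu> (\<lambda>x. ennreal (r x)) = density lborel (\<lambda>x. ennreal (gr x) * ennreal (r x))"
      unfolding \<mu> by (rule density_density_eq) auto
    also have "\<dots> = density lborel (\<lambda>x. ennreal (fr x))"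
    proof (rule density_cong)
      show "AE x in lborel. ennreal (gr x) * ennreal (r x) = ennreal (fr x)"
        using AEfin
      proof eventually_elim
        case (elim x)
        show ?case
        proof (cases "\<Phi> x \<noteq> \<infinity> \<and> V x \<noteq> \<infinity>")
          case True
          have "gr x > 0" using True Zp by (simp add: gr_def Ef_def)
          then have "gr x * r x = fr x" using True by (simp add: r_def)
          then show ?thesis using gr0[of x] r0[of x] by (simp add: ennreal_mult[symmetric])
        next
          case False
          then have "\<not> 0 < fr x" using elim by blast
          then have "fr x = 0" using gr0[of x] by simp
          then show ?thesis using False by (simp add: r_def)
        qed
      qed
    qed auto
    finally show ?thesis unfolding \<nu> .
  qed
  interpret \<nu>: prob_space \<nu> by (rule \<nu>p)
  have RN: "AE x in \<mu>. ennreal (r x) = RN_deriv \<mu> \<nu> x"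
    by (rule sigma_finite_measure.RN_deriv_unique[OF prob_space_imp_sigma_finite[OF \<mu>p] _ dens]) simp
  have RN': "AE x in \<mu>. RN_deriv \<mu> \<nu> x = ennreal (r x)" using RN by (auto elim: eventually_mono)
  have ex: "\<exists>\<rho>\<in>borel_measurable \<mu>. \<nu> = density \<mu> \<rho>"
    using dens by (intro bexI[of _ "\<lambda>x. ennreal (r x)"]) auto
  have NN: "(\<integral>\<^sup>+ x. ennreal (s * (enn2real (RN_deriv \<mu> \<nu> x) * ln (enn2real (RN_deriv \<mu> \<nu> x)))) \<partial>\<mu>)
      = (\<integral>\<^sup>+ x. ennreal (s * h x) \<partial>\<nu>)" for s
  proof -
    have "(\<integral>\<^sup>+ x. ennreal (s * (enn2real (RN_deriv \<mu> \<nu> x) * ln (enn2real (RN_deriv \<mu> \<nu> x)))) \<partial>\<mu>)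
       = (\<integral>\<^sup>+ x. ennreal (s * (r x * ln (r x))) \<partial>\<mu>)"
      using RN' by (intro nn_integral_cong_AE) (auto elim!: eventually_mono simp: r0)
    also have "\<dots> = (\<integral>\<^sup>+ x. ennreal (gr x) * ennreal (s * (r x * ln (r x))) \<partial>lborel)"
      unfolding \<mu> by (rule nn_integral_density) auto
    also have "\<dots> = (\<integral>\<^sup>+ x. ennreal (fr x) * ennreal (s * h x) \<partial>lborel)"
      using AEfin
    proof (intro nn_integral_cong_AE, eventually_elim)
      case (elim x)
      show ?case
      proof (cases "\<Phi> x \<noteq> \<infinity> \<and> V x \<noteq> \<infinity>")
        case True
        have e1: "ennreal (gr x) * ennreal (s * (r x * ln (r x))) = ennreal (gr x * (s * (r x * ln (r x))))"
          by (rule ennreal_mult'[symmetric]) (rule gr0)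
        have e2: "ennreal (fr x) * ennreal (s * h x) = ennreal (fr x * (s * h x))"
          by (rule ennreal_mult'[symmetric]) (rule gr0)
        show ?thesis unfolding e1 e2 key[OF True[THEN conjunct1] True[THEN conjunct2]] ..
      next
        case False
        then have "\<not> 0 < fr x" using elim by blast
        then have "fr x = 0" using gr0[of x] by simp
        then show ?thesis using False by (simp add: r_def)
      qed
    qed
    also have "\<dots> = (\<integral>\<^sup>+ x. ennreal (s * h x) \<partial>\<nu>)"
      unfolding \<nu> by (rule nn_integral_density[symmetric]) auto
    finally show ?thesis .
  qed
  have N1: "(\<integral>\<^sup>+ x. ennreal (enn2real (RN_deriv \<mu> \<nu> x) * ln (enn2real (RN_deriv \<mu> \<nu> x))) \<partial>\<mu>)
      = (\<integral>\<^sup>+ x. ennreal (h x) \<partial>\<nu>)" using NN[of 1] by simp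
  have N2: "(\<integral>\<^sup>+ x. ennreal (- (enn2real (RN_deriv \<mu> \<nu> x) * ln (enn2real (RN_deriv \<mu> \<nu> x)))) \<partial>\<mu>)
      = (\<integral>\<^sup>+ x. ennreal (- h x) \<partial>\<nu>)" using NN[of "-1"] by simp
  have iP: "integrable \<nu> (\<lambda>x. real_of_ereal (\<Phi> x))" and iV: "integrable \<nu> (\<lambda>x. real_of_ereal (V x))"
    using L1P L1V unfolding L1e_def \<nu>_def by auto
  have hh: "h = (\<lambda>x. a * (real_of_ereal (\<Phi> x) - real_of_ereal (V x)) + (ln Zp - ln Zv))"
    unfolding h_def by (auto simp: algebra_simps)
  have ih: "integrable \<nu> h" unfolding hh using iP iV by auto
  have "Ent \<mu> \<nu> = enn2ereal (\<integral>\<^sup>+ x. ennreal (h x) \<partial>\<nu>) - enn2ereal (\<integral>\<^sup>+ x. ennreal (- h x) \<partial>\<nu>)"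
    unfolding Ent_def using ex N1 N2 by (simp add: Let_def)
  also have "\<dots> = ereal (enn2real (\<integral>\<^sup>+ x. ennreal (h x) \<partial>\<nu>) - enn2real (\<integral>\<^sup>+ x. ennreal (- h x) \<partial>\<nu>))"
    using integrable_fin[OF ih] by (simp add: enn2ereal_fin)
  also have "\<dots> = ereal (\<integral>x. h x \<partial>\<nu>)" by (simp add: real_lebesgue_integral_def[OF ih])
  also have "(\<integral>x. h x \<partial>\<nu>) = a * (\<integral>x. real_of_ereal (\<Phi> x) - real_of_ereal (V x) \<partial>\<nu>) + (ln Zp - ln Zv)"
    unfolding hh using iP iV \<nu>.prob_space by simp
  finally show ?thesis unfolding \<mu>_def \<nu>_def Zp_def Zv_def by simp
qed

lemma ennreal_integral_le:
  assumes "integrable M (G::'a \<Rightarrow> real)"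
  shows "ennreal (\<integral>x. G x \<partial>M) \<le> (\<integral>\<^sup>+ x. ennreal (G x) \<partial>M)"
proof -
  have "(\<integral>x. G x \<partial>M) \<le> enn2real (\<integral>\<^sup>+ x. ennreal (G x) \<partial>M)"
    unfolding real_lebesgue_integral_def[OF assms] by simp
  then have "ennreal (\<integral>x. G x \<partial>M) \<le> ennreal (enn2real (\<integral>\<^sup>+ x. ennreal (G x) \<partial>M))"
    by (rule ennreal_leI)
  also have "\<dots> = (\<integral>\<^sup>+ x. ennreal (G x) \<partial>M)" using integrable_fin(1)[OF assms] by simp
  finally show ?thesis .
qed

lemma coupling_bound:
  fixes c :: "('i::finite \<Rightarrow> 'a::euclidean_space) \<Rightarrow> real"
    and \<Phi> V :: "'i \<Rightarrow> 'a \<Rightarrow> ereal" and \<nu> :: "'i \<Rightarrow> 'a measure"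
  assumes V_adm: "admissible c V"
    and P[measurable]: "\<And>i. \<Phi> i \<in> borel_measurable borel"
    and V[measurable]: "\<And>i. V i \<in> borel_measurable borel"
    and fin: "\<And>i. AE x in \<nu> i. \<bar>\<Phi> i x\<bar> \<noteq> \<infinity> \<and> \<bar>V i x\<bar> \<noteq> \<infinity>"
    and iP: "\<And>i. integrable (\<nu> i) (\<lambda>x. real_of_ereal (\<Phi> i x))"
    and iV: "\<And>i. integrable (\<nu> i) (\<lambda>x. real_of_ereal (V i x))"
    and \<pi>: "\<pi> \<in> couplings \<nu>"
  shows "ennreal (\<Sum>i\<in>UNIV. \<integral>x. real_of_ereal (\<Phi> i x) - real_of_ereal (V i x) \<partial>\<nu> i)
     \<le> (\<integral>\<^sup>+ x. e2ennreal ((\<Sum>i\<in>UNIV. \<Phi> i (x i)) - ereal (c x)) \<partial>\<pi>)"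
proof -
  have sets\<pi>: "sets \<pi> = sets (PiM UNIV (\<lambda>_. borel :: 'a measure))" and marg: "\<And>i. distr \<pi> borel (\<lambda>x. x i) = \<nu> i"
    using \<pi> unfolding couplings_def by auto
  have mi[measurable]: "(\<lambda>x. x i) \<in> measurable \<pi> borel" for i
    using measurable_component_singleton[of i UNIV "\<lambda>_. borel :: 'a measure"]
    by (simp add: measurable_cong_sets[OF sets\<pi> refl])
  define g where "g i y = real_of_ereal (\<Phi> i y) - real_of_ereal (V i y)" for i y
  have [measurable]: "g i \<in> borel_measurable borel" for i unfolding g_def by measurable
  have ig: "integrable (\<nu> i) (g i)" for i unfolding g_def using iP iV by auto
  have igp: "integrable \<pi> (\<lambda>x. g i (x i))" for i
    using ig[of i] unfolding marg[symmetric] by (subst (asm) integrable_distr_eq) auto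
  define G where "G x = (\<Sum>i\<in>UNIV. g i (x i))" for x
  have iG: "integrable \<pi> G" unfolding G_def using igp by auto
  have intG: "(\<integral>x. G x \<partial>\<pi>) = (\<Sum>i\<in>UNIV. \<integral>x. g i x \<partial>\<nu> i)"
    unfolding G_def using igp
    by (simp add: integral_sum marg[symmetric] integral_distr)
  have AEi: "AE x in \<pi>. \<bar>\<Phi> i (x i)\<bar> \<noteq> \<infinity> \<and> \<bar>V i (x i)\<bar> \<noteq> \<infinity>" for i
    using fin[of i] unfolding marg[symmetric] by (subst (asm) AE_distr_iff) auto
  have AEall: "AE x in \<pi>. \<forall>i. \<bar>\<Phi> i (x i)\<bar> \<noteq> \<infinity> \<and> \<bar>V i (x i)\<bar> \<noteq> \<infinity>"
    by (rule eventually_all_finite) (use AEi in blast)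
  have "ennreal (\<integral>x. G x \<partial>\<pi>) \<le> (\<integral>\<^sup>+ x. ennreal (G x) \<partial>\<pi>)" by (rule ennreal_integral_le[OF iG])
  also have "\<dots> \<le> (\<integral>\<^sup>+ x. e2ennreal ((\<Sum>i\<in>UNIV. \<Phi> i (x i)) - ereal (c x)) \<partial>\<pi>)"
    using AEall
  proof (intro nn_integral_mono_AE, eventually_elim)
    case (elim x)
    have eP: "(\<Sum>i\<in>UNIV. \<Phi> i (x i)) = ereal (\<Sum>i\<in>UNIV. real_of_ereal (\<Phi> i (x i)))"
      unfolding sum_ereal[symmetric] using elim by (intro sum.cong refl) (simp add: ereal_real')
    have eV: "(\<Sum>i\<in>UNIV. V i (x i)) = ereal (\<Sum>i\<in>UNIV. real_of_ereal (V i (x i)))"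
      unfolding sum_ereal[symmetric] using elim by (intro sum.cong refl) (simp add: ereal_real')
    have "c x \<le> (\<Sum>i\<in>UNIV. real_of_ereal (V i (x i)))"
      using V_adm unfolding admissible_def eV[symmetric] by (metis eV ereal_less_eq(3))
    then have "G x \<le> (\<Sum>i\<in>UNIV. real_of_ereal (\<Phi> i (x i))) - c x"
      unfolding G_def g_def by (simp add: sum_subtractf)
    then have "ereal (G x) \<le> (\<Sum>i\<in>UNIV. \<Phi> i (x i)) - ereal (c x)" unfolding eP by simp
    then show ?case using e2ennreal_mono by fastforce
  qed
  finally show ?thesis unfolding intG g_def .
qed

theorem theorem2p4:
  fixes c :: "('i::finite \<Rightarrow> 'a::euclidean_space) \<Rightarrow> real"
    and \<alpha> :: "'i \<Rightarrow> real"
    and \<Phi> V :: "'i \<Rightarrow> 'a \<Rightarrow> ereal"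
  assumes c_meas: "c \<in> borel_measurable (PiM UNIV (\<lambda>_. borel))"
    and alpha_pos: "\<And>i. \<alpha> i > 0"
    and Phi_meas: "\<And>i. \<Phi> i \<in> borel_measurable borel"
    and Phi_range: "\<And>i x. \<Phi> i x \<noteq> -\<infinity>"
    and Phi_adm: "admissible c \<Phi>"
    and Phi_Z: "\<And>i. 0 < Zint (\<alpha> i) (\<Phi> i) \<and> Zint (\<alpha> i) (\<Phi> i) < \<infinity>"
    and transport_entropy:
      "\<And>\<nu>. (\<forall>i. prob_space (\<nu> i) \<and> sets (\<nu> i) = sets borel) \<Longrightarrow>
        enn2ereal (Kmin (\<lambda>x. e2ennreal ((\<Sum>i\<in>UNIV. \<Phi> i (x i)) - ereal (c x))) \<nu>)
          \<le> (\<Sum>i\<in>UNIV. ereal (1 / \<alpha> i) * Ent (gibbs (\<alpha> i) (\<Phi> i)) (\<nu> i))"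
    and V_meas: "\<And>i. V i \<in> borel_measurable borel"
    and V_range: "\<And>i x. V i x \<noteq> -\<infinity>"
    and V_adm: "admissible c V"
    and V_Z: "\<And>i. 0 < Zint (\<alpha> i) (V i) \<and> Zint (\<alpha> i) (V i) < \<infinity>"
    and L1: "\<And>i. L1e (gibbs (\<alpha> i) (V i)) (V i) \<and> L1e (gibbs (\<alpha> i) (V i)) (\<Phi> i)"
  shows "(\<Prod>i\<in>UNIV. enn2real (Zint (\<alpha> i) (V i)) powr (1 / \<alpha> i))
         \<le> (\<Prod>i\<in>UNIV. enn2real (Zint (\<alpha> i) (\<Phi> i)) powr (1 / \<alpha> i))"
proof -
  define \<nu> where "\<nu> i = gibbs (\<alpha> i) (V i)" for i
  define Zp where "Zp i = enn2real (Zint (\<alpha> i) (\<Phi> i))" for i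
  define Zv where "Zv i = enn2real (Zint (\<alpha> i) (V i))" for i
  define A where "A i = (\<integral>x. real_of_ereal (\<Phi> i x) - real_of_ereal (V i x) \<partial>\<nu> i)" for i
  have Zp: "Zp i > 0" for i using Phi_Z[of i] unfolding Zp_def by (simp add: enn2real_positive_iff less_top)
  have Zv: "Zv i > 0" for i using V_Z[of i] unfolding Zv_def by (simp add: enn2real_positive_iff less_top)
  have \<nu>p: "prob_space (\<nu> i) \<and> sets (\<nu> i) = sets borel" for i
    unfolding \<nu>_def using gibbs_repr(2)[OF V_meas V_range V_Z[THEN conjunct1] V_Z[THEN conjunct2]]
    by (simp add: gibbs_def)
  have Ent: "Ent (gibbs (\<alpha> i) (\<Phi> i)) (\<nu> i) = ereal (\<alpha> i * A i + ln (Zp i) - ln (Zv i))" for i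
    unfolding \<nu>_def A_def Zp_def Zv_def
    using ent_gibbs[OF alpha_pos Phi_meas Phi_range Phi_Z[THEN conjunct1] Phi_Z[THEN conjunct2]
        V_meas V_range V_Z[THEN conjunct1] V_Z[THEN conjunct2] L1[THEN conjunct1] L1[THEN conjunct2]] .
  define K where "K = Kmin (\<lambda>x. e2ennreal ((\<Sum>i\<in>UNIV. \<Phi> i (x i)) - ereal (c x))) \<nu>"
  have TE: "enn2ereal K \<le> (\<Sum>i\<in>UNIV. ereal (1 / \<alpha> i) * Ent (gibbs (\<alpha> i) (\<Phi> i)) (\<nu> i))"
    unfolding K_def by (rule transport_entropy) (use \<nu>p in blast)
  also have "\<dots> = ereal (\<Sum>i\<in>UNIV. A i + (ln (Zp i) - ln (Zv i)) / \<alpha> i)"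
    unfolding Ent sum_ereal[symmetric]
  proof (intro sum.cong refl)
    fix i
    show "ereal (1 / \<alpha> i) * ereal (\<alpha> i * A i + ln (Zp i) - ln (Zv i)) = ereal (A i + (ln (Zp i) - ln (Zv i)) / \<alpha> i)"
      using alpha_pos[of i] by (simp add: field_simps)
  qed
  finally have TE2: "enn2ereal K \<le> ereal (\<Sum>i\<in>UNIV. A i + (ln (Zp i) - ln (Zv i)) / \<alpha> i)" .
  have KA: "ennreal (\<Sum>i\<in>UNIV. A i) \<le> K"
    unfolding K_def Kmin_def
  proof (rule INF_greatest)
    fix \<pi> assume \<pi>: "\<pi> \<in> couplings \<nu>"
    show "ennreal (\<Sum>i\<in>UNIV. A i) \<le> (\<integral>\<^sup>+ x. e2ennreal ((\<Sum>i\<in>UNIV. \<Phi> i (x i)) - ereal (c x)) \<partial>\<pi>)"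
      unfolding A_def
    proof (rule coupling_bound[OF V_adm Phi_meas V_meas _ _ _ \<pi>])
      fix i
      show "AE x in \<nu> i. \<bar>\<Phi> i x\<bar> \<noteq> \<infinity> \<and> \<bar>V i x\<bar> \<noteq> \<infinity>"
        using L1[of i] unfolding L1e_def \<nu>_def by (auto elim: eventually_mp[rotated] intro: eventually_conj)
      show "integrable (\<nu> i) (\<lambda>x. real_of_ereal (\<Phi> i x))" "integrable (\<nu> i) (\<lambda>x. real_of_ereal (V i x))"
        using L1[of i] unfolding L1e_def \<nu>_def by auto
    qed
  qed
  have "ereal (\<Sum>i\<in>UNIV. A i) \<le> enn2ereal (ennreal (\<Sum>i\<in>UNIV. A i))"
    by (cases "(\<Sum>i\<in>UNIV. A i) \<ge> 0") (auto simp: ennreal_neg zero_ennreal.rep_eq)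
  also have "\<dots> \<le> enn2ereal K" using KA by (simp add: less_eq_ennreal.rep_eq)
  finally have "ereal (\<Sum>i\<in>UNIV. A i) \<le> ereal (\<Sum>i\<in>UNIV. A i + (ln (Zp i) - ln (Zv i)) / \<alpha> i)"
    using TE2 by (rule order_trans)
  then have L: "(\<Sum>i\<in>UNIV. ln (Zv i) / \<alpha> i) \<le> (\<Sum>i\<in>UNIV. ln (Zp i) / \<alpha> i)"
    by (simp add: sum.distrib diff_divide_distrib sum_subtractf)
  have "(\<Prod>i\<in>UNIV. Zv i powr (1 / \<alpha> i)) = exp (\<Sum>i\<in>UNIV. ln (Zv i) / \<alpha> i)"
    unfolding exp_sum[OF finite] using Zv by (intro prod.cong refl) (simp add: powr_def less_imp_neq[symmetric])
  also have "\<dots> \<le> exp (\<Sum>i\<in>UNIV. ln (Zp i) / \<alpha> i)" using L by simp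
  also have "\<dots> = (\<Prod>i\<in>UNIV. Zp i powr (1 / \<alpha> i))"
    unfolding exp_sum[OF finite] using Zp by (intro prod.cong refl) (simp add: powr_def less_imp_neq[symmetric])
  finally show ?thesis unfolding Zp_def Zv_def .
qed

end
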